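(* Let $\Gamma$ be an Arf numerical semigroup with multiplicity $e>1$ and conductor $c$, let $e'\in\Gamma\setminus\{0\}$, $\Gamma_{e'}=\{0\}\cup(e'+\Gamma)$, and $c'=c+e'$ (the conductor of $\Gamma_{e'}$). Then \[ \delta^2_{\Gamma_{e'}}(c'+e'-1)=\begin{cases}4 & \text{if } e'=e,\\ 5 & \text{otherwise.}\end{cases} \]
   Context: A numerical semigroup is a subset $\Gamma\subseteq\mathbb N$ containing $0$, closed under addition, with finite complement; write $\Gamma=\{0=\rho_1<\rho_2<\cdots\}$; multiplicity $e=\rho_2$; conductor = least $c$ with $c+\mathbb N\subseteq\Gamma$. $\Gamma$ is Arf if $\rho_i+\rho_j-\rho_k\in\Gamma$ for all $i\ge j\ge k$. For a numerical semigroup $S$: $D_S(x)=\{s\in S:x-s\in S\}$ and $\delta^2_S(m)=\min\{|D_S(m_1)\cup D_S(m_2)|: m\le m_1<m_2,\ m_i\in S\}$. *)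

theory Defs
  imports Main
begin

definition numerical_semigroup :: "nat set \<Rightarrow> bool" where
  "numerical_semigroup S \<longleftrightarrow> 0 \<in> S \<and> (\<forall>x\<in>S. \<forall>y\<in>S. x + y \<in> S) \<and> finite (UNIV - S)"

definition arf :: "nat set \<Rightarrow> bool" where
  "arf S \<longleftrightarrow> (\<forall>x\<in>S. \<forall>y\<in>S. \<forall>z\<in>S. x \<ge> y \<and> y \<ge> z \<longrightarrow> x + y - z \<in> S)"

definition multiplicity_ns :: "nat set \<Rightarrow> nat" where
  "multiplicity_ns S = (LEAST x. x \<in> S \<and> x \<noteq> 0)"

definition conductor :: "nat set \<Rightarrow> nat" where
  "conductor S = (LEAST c. \<forall>n. c \<le> n \<longrightarrow> n \<in> S)"

definition D_set :: "nat set \<Rightarrow> nat \<Rightarrow> nat set" where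
  "D_set S x = {s \<in> S. s \<le> x \<and> x - s \<in> S}"

definition delta2 :: "nat set \<Rightarrow> nat \<Rightarrow> nat" where
  "delta2 S m = (LEAST k. \<exists>m1 m2. m1 \<in> S \<and> m2 \<in> S \<and> m \<le> m1 \<and> m1 < m2
                   \<and> k = card (D_set S m1 \<union> D_set S m2))"

definition shifted_sg :: "nat set \<Rightarrow> nat \<Rightarrow> nat set" where
  "shifted_sg S e' = {0} \<union> ((+) e' ` S)"

end

theory Submission
  imports Defs
begin

lemma finite_D: "finite (D_set S x)"
  unfolding D_set_def by (rule finite_subset[of _ "{..x}"]) auto

theorem lemma4p10:
  fixes \<Gamma> :: "nat set" and e e' c :: nat
  assumes "numerical_semigroup \<Gamma>" and "arf \<Gamma>"
    and "e = multiplicity_ns \<Gamma>" and "e > 1"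
    and "c = conductor \<Gamma>"
    and "e' \<in> \<Gamma>" and "e' \<noteq> 0"
  shows "delta2 (shifted_sg \<Gamma> e') ((c + e') + e' - 1) = (if e' = e then 4 else 5)"
proof -
  note ns = assms(1)[unfolded numerical_semigroup_def]
  have z: "0 \<in> \<Gamma>" using ns by blast
  have add: "\<And>x y. x \<in> \<Gamma> \<Longrightarrow> y \<in> \<Gamma> \<Longrightarrow> x + y \<in> \<Gamma>" using ns by blast
  have fin: "finite (UNIV - \<Gamma>)" using ns by blast
  obtain B where B: "\<forall>n. B \<le> n \<longrightarrow> n \<in> \<Gamma>"
  proof -
    obtain M where "\<forall>x\<in>UNIV - \<Gamma>. x \<le> M" using fin finite_nat_set_iff_bounded_le by blast
    then show ?thesis using that[of "Suc M"] by force
  qed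
  have cP: "\<forall>n. c \<le> n \<longrightarrow> n \<in> \<Gamma>"
    unfolding assms(5) conductor_def by (rule LeastI[of _ B]) (rule B)
  have cP': "\<And>n. c \<le> n \<Longrightarrow> n \<in> \<Gamma>" using cP by blast
  have cnot: "c > 0 \<Longrightarrow> c - 1 \<notin> \<Gamma>"
  proof
    assume "c > 0" "c - 1 \<in> \<Gamma>"
    have "\<forall>n. c - 1 \<le> n \<longrightarrow> n \<in> \<Gamma>"
    proof (intro allI impI)
      fix n assume "c - 1 \<le> n"
      show "n \<in> \<Gamma>"
      proof (cases "n = c - 1")
        case True thus ?thesis using \<open>c - 1 \<in> \<Gamma>\<close> by simp
      next
        case False thus ?thesis using cP \<open>c - 1 \<le> n\<close> by simp
      qed
    qed
    hence "c \<le> c - 1" unfolding assms(5) conductor_def by (rule Least_le)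
    with \<open>c > 0\<close> show False by simp
  qed
  have eP: "e \<in> \<Gamma> \<and> e \<noteq> 0"
    unfolding assms(3) multiplicity_ns_def by (rule LeastI[of _ "Suc B"]) (use B in auto)
  have emin: "\<And>x. x \<in> \<Gamma> \<Longrightarrow> x \<noteq> 0 \<Longrightarrow> e \<le> x"
    unfolding assms(3) multiplicity_ns_def by (rule Least_le) simp
  have one: "1 \<notin> \<Gamma>"
  proof
    assume "1 \<in> \<Gamma>" hence "e \<le> 1" using emin by simp
    with assms(4) show False by simp
  qed
  have cpos: "c > 0"
  proof (rule ccontr)
    assume "\<not> c > 0" hence "c = 0" by simp
    hence "1 \<in> \<Gamma>" using cP by simp
    with one show False ..
  qed
  have cm1: "c - 1 \<notin> \<Gamma>" using cnot cpos by blast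
  have ee': "e \<le> e'" using emin assms(6,7) by blast
  have arf: "\<And>x y z. x \<in> \<Gamma> \<Longrightarrow> y \<in> \<Gamma> \<Longrightarrow> z \<in> \<Gamma> \<Longrightarrow> y \<le> x \<Longrightarrow> z \<le> y \<Longrightarrow> x + y - z \<in> \<Gamma>"
    using assms(2) unfolding arf_def by blast
  define S where "S = shifted_sg \<Gamma> e'"
  have memS: "\<And>x. x \<in> S \<longleftrightarrow> x = 0 \<or> (e' \<le> x \<and> x - e' \<in> \<Gamma>)"
    unfolding S_def shifted_sg_def by force
  have memD: "\<And>x s. s \<in> D_set S x \<longleftrightarrow> s \<in> S \<and> s \<le> x \<and> x - s \<in> S"
    unfolding D_set_def by simp
  define m where "m = c + e' + e' - 1"
  define K where "K = (if e' = e then 4 else 5 :: nat)"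
  define w1 where "w1 = c - 1 + 2 * e'"
  define w2 where "w2 = c - 1 + e + 2 * e'"
  have Dw1: "D_set S w1 = {0, w1}"
  proof (rule set_eqI, rule iffI)
    fix s assume s: "s \<in> D_set S w1"
    show "s \<in> {0, w1}"
    proof (rule ccontr)
      assume "s \<notin> {0, w1}"
      hence "s \<noteq> 0" "s \<noteq> w1" by auto
      with s have "e' \<le> s" "s - e' \<in> \<Gamma>" "e' \<le> w1 - s" "w1 - s - e' \<in> \<Gamma>" "s \<le> w1"
        using memD memS by auto
      hence "(s - e') + (w1 - s - e') \<in> \<Gamma>" using add by blast
      moreover have "(s - e') + (w1 - s - e') = c - 1"
        using \<open>e' \<le> s\<close> \<open>e' \<le> w1 - s\<close> \<open>s \<le> w1\<close> cpos unfolding w1_def by linarith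
      ultimately show False using cm1 by simp
    qed
  next
    fix s assume "s \<in> {0, w1}"
    moreover have "w1 \<in> S" using memS cpos assms(7) unfolding w1_def by (auto intro!: cP')
    ultimately show "s \<in> D_set S w1" using memD memS by auto
  qed
  have Dw2: "D_set S w2 = {0, w2, e', w2 - e'}"
  proof (rule set_eqI, rule iffI)
    fix s assume s: "s \<in> D_set S w2"
    show "s \<in> {0, w2, e', w2 - e'}"
    proof (rule ccontr)
      assume "s \<notin> {0, w2, e', w2 - e'}"
      hence ne: "s \<noteq> 0" "s \<noteq> w2" "s \<noteq> e'" "s \<noteq> w2 - e'" by auto
      with s have h: "e' \<le> s" "s - e' \<in> \<Gamma>" "e' \<le> w2 - s" "w2 - s - e' \<in> \<Gamma>" "s \<le> w2"
        using memD memS by auto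
      define a where "a = s - e'"
      define b where "b = w2 - s - e'"
      have ab: "a \<in> \<Gamma>" "b \<in> \<Gamma>" "a \<noteq> 0" "b \<noteq> 0" using h ne unfolding a_def b_def by auto
      have sum: "a + b = c - 1 + e" using h cpos unfolding a_def b_def w2_def by linarith
      have ea: "e \<le> a" "e \<le> b" using emin ab by auto
      have "a + b - e \<in> \<Gamma>"
      proof (cases "b \<le> a")
        case True thus ?thesis using arf[of a b e] ab ea eP by blast
      next
        case False thus ?thesis using arf[of b a e] ab ea eP by (simp add: add.commute)
      qed
      thus False using sum cm1 by simp
    qed
  next
    fix s assume s: "s \<in> {0, w2, e', w2 - e'}"
    have g: "c - 1 + e \<in> \<Gamma>" using cP cpos eP by auto
    have "e' \<in> S" using memS z by simp
    moreover have "w2 \<in> S" using memS cpos eP assms(7) unfolding w2_def by (auto intro!: cP')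
    moreover have "w2 - e' \<in> S" using memS cpos eP assms(7) unfolding w2_def by (auto intro!: cP')
    moreover have "w2 - e' - e' = c - 1 + e" unfolding w2_def by simp
    ultimately show "s \<in> D_set S w2" using s memD memS g unfolding w2_def by auto
  qed
  have w1S: "w1 \<in> S" using memS cpos assms(7) unfolding w1_def by (auto intro!: cP')
  have w2S: "w2 \<in> S" using memS cpos eP assms(7) unfolding w2_def by (auto intro!: cP')
  have wcard: "card (D_set S w1 \<union> D_set S w2) = K"
  proof -
    have "D_set S w1 \<union> D_set S w2 = {0, w1, w2, e', w2 - e'}" using Dw1 Dw2 by auto
    moreover have "0 < e'" "e' < w1" "w1 < w2" "e' < w2 - e'" "w2 - e' < w2" "w2 - e' \<le> w1"
      using assms(7) cpos eP ee' unfolding w1_def w2_def by auto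
    moreover have "w2 - e' = w1 \<longleftrightarrow> e' = e" using ee' unfolding w1_def w2_def by auto
    ultimately show ?thesis
    proof (cases "e' = e")
      case True
      hence "{0, w1, w2, e', w2 - e'} = {0, w1, w2, e'}" using \<open>w2 - e' = w1 \<longleftrightarrow> e' = e\<close> by auto
      thus ?thesis using True \<open>D_set S w1 \<union> D_set S w2 = {0, w1, w2, e', w2 - e'}\<close>
        \<open>0 < e'\<close> \<open>e' < w1\<close> \<open>w1 < w2\<close> by (simp add: K_def)
    next
      case False
      hence "w2 - e' \<noteq> w1" using \<open>w2 - e' = w1 \<longleftrightarrow> e' = e\<close> by auto
      thus ?thesis using False \<open>D_set S w1 \<union> D_set S w2 = {0, w1, w2, e', w2 - e'}\<close>
        \<open>0 < e'\<close> \<open>e' < w1\<close> \<open>w1 < w2\<close> \<open>e' < w2 - e'\<close> \<open>w2 - e' < w2\<close> by (simp add: K_def)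
    qed
  qed
  have lower: "K \<le> card (D_set S m1 \<union> D_set S m2)"
    if h: "m1 \<in> S" "m2 \<in> S" "m \<le> m1" "m1 < m2" for m1 m2
  proof -
    let ?U = "D_set S m1 \<union> D_set S m2"
    have finU: "finite ?U" using finite_D by blast
    have t2: "c \<le> m2 - 2 * e'" using h unfolding m_def by linarith
    have g2: "m2 - 2 * e' \<in> \<Gamma>" using t2 cP by blast
    have in1: "0 \<in> ?U" "m1 \<in> ?U" "m2 \<in> ?U" using h memD memS by auto
    have eS: "e' \<in> S" using memS z by simp
    have m2e: "m2 - e' - e' = m2 - 2 * e'" by simp
    have "m2 - e' \<in> S" unfolding memS
    proof -
      have "e' \<le> m2 - e'" using t2 cpos by linarith
      thus "m2 - e' = 0 \<or> e' \<le> m2 - e' \<and> m2 - e' - e' \<in> \<Gamma>" using m2e g2 by simp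
    qed
    hence "e' \<in> D_set S m2" "m2 - e' \<in> D_set S m2"
      unfolding memD using eS t2 cpos \<open>m2 \<in> S\<close> by (auto simp: diff_diff_cancel)
    hence in2: "e' \<in> ?U" "m2 - e' \<in> ?U" by auto
    have o: "0 < e'" "e' < m1" "m1 < m2" "e' < m2 - e'" "m2 - e' < m2"
      using h assms(7) cpos t2 unfolding m_def by auto
    show ?thesis
    proof (cases "e' = e")
      case True
      have "{0, m1, m2, e'} \<subseteq> ?U" using in1 in2 by blast
      hence "card {0, m1, m2, e'} \<le> card ?U" by (rule card_mono[OF finU])
      moreover have "card {0, m1, m2, e'} = 4" using o by simp
      ultimately show ?thesis unfolding K_def using True by simp
    next
      case False
      hence lt: "e < e'" using ee' by simp
      have "\<exists>y. y \<in> ?U \<and> y \<notin> {0, m1, m2, e'}"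
      proof (cases "m1 = m2 - e'")
        case False
        have "m2 - e' \<notin> {0, m1, m2, e'}" using False o by simp
        thus ?thesis using in2(2) by blast
      next
        case eq: True
        show ?thesis
        proof (cases "c \<le> m1 - 2 * e'")
          case True
          have g1: "m1 - e' - e' \<in> \<Gamma>" using cP' True by simp
          have le1: "e' \<le> m1 - e'" using True cpos by linarith
          have "m1 - e' \<in> S" unfolding memS using g1 le1 by simp
          moreover have "m1 - (m1 - e') = e'" using o by simp
          ultimately have "m1 - e' \<in> D_set S m1" unfolding memD using eS by simp
          moreover have "m1 - e' \<notin> {0, m1, m2, e'}" using o le1 True cpos by auto
          ultimately show ?thesis by blast
        next
          case False
          hence m1v: "m1 = c - 1 + 2 * e'" using h unfolding m_def by linarith
          have m2v: "m2 = c - 1 + 3 * e'" using eq m1v o by linarith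
          have gb: "c - 1 + e' - e \<in> \<Gamma>" using cP' lt cpos by simp
          have s1: "e' + e \<in> S" unfolding memS using eP by simp
          have s2: "m2 - (e' + e) - e' = c - 1 + e' - e" using m2v lt by simp
          have s3: "e' \<le> m2 - (e' + e)" using m2v lt cpos by simp
          have "m2 - (e' + e) \<in> S" unfolding memS using s2 s3 gb by simp
          moreover have "e' + e \<le> m2" using m2v lt cpos by simp
          ultimately have "e' + e \<in> D_set S m2" unfolding memD using s1 by simp
          moreover have "e' + e \<notin> {0, m1, m2, e'}" using m1v m2v eP lt cpos by auto
          ultimately show ?thesis by blast
        qed
      qed
      then obtain y where y: "y \<in> ?U" "y \<notin> {0, m1, m2, e'}" by blast
      have "insert y {0, m1, m2, e'} \<subseteq> ?U" using in1 in2 y(1) by blast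
      hence "card (insert y {0, m1, m2, e'}) \<le> card ?U" by (rule card_mono[OF finU])
      moreover have "card {0, m1, m2, e'} = 4" using o by simp
      moreover have "card (insert y {0, m1, m2, e'}) = Suc (card {0, m1, m2, e'})"
        using y(2) by (intro card_insert_disjoint) auto
      ultimately show ?thesis unfolding K_def using False by simp
    qed
  qed
  have wm: "m \<le> w1" "w1 < w2" using cpos eP unfolding m_def w1_def w2_def by auto
  have "delta2 S m = K"
    unfolding delta2_def
  proof (rule Least_equality)
    show "\<exists>m1 m2. m1 \<in> S \<and> m2 \<in> S \<and> m \<le> m1 \<and> m1 < m2 \<and> K = card (D_set S m1 \<union> D_set S m2)"
      using w1S w2S wm wcard by metis
  next
    fix k assume "\<exists>m1 m2. m1 \<in> S \<and> m2 \<in> S \<and> m \<le> m1 \<and> m1 < m2 \<and> k = card (D_set S m1 \<union> D_set S m2)"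
    thus "K \<le> k" using lower by blast
  qed
  thus ?thesis unfolding S_def m_def K_def .
qed

end
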